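(* An algebra $(S,\sqcup,\cap)$ with two binary operations is functional (isomorphic to a set of partial functions closed under override and intersection, with the operations interpreted as override and intersection) if and only if it is an ado-semilattice. In particular the functional algebras of signature $(\sqcup,\cap)$ form the finitely axiomatised variety of ado-semilattices.
   Context: For sets $X,Y$, $\mathrm{Par}(X,Y)$ is the set of partial functions from $X$ to $Y$, viewed as sets of ordered pairs. For $f,g\in\mathrm{Par}(X,Y)$, override is $f\sqcup g=f\cup(g-f)$, where $g-f$ is the restriction of $g$ to $X\setminus\mathrm{dom}(f)$; $f\cap g$ is set-theoretic intersection. An algebra $(S,\sqcup,\cap)$ is functional if it is isomorphic to $(A,\sqcup,\cap)$ for some $A\subseteq\mathrm{Par}(X,Y)$ closed under $\sqcup$ and $\cap$. An o-semilattice is an algebra $(L,\cap,\sqcup)$ such that $(L,\cap)$ is a semilattice and, with $x\leq y$ iff $x=x\cap y$, for all $x,y,z$: (i) $x\leq x\sqcup y$; (ii) $(x\cap y)\sqcup(y\cap z)\leq y$; (iii) $x\sqcup y\leq x\sqcup(y\cap(x\sqcup y))$; (iv) $x\cap z\leq(x\cap y)\sqcup z$. It is distributive if $(a\cap d)\sqcup((b\cap d)\cap(c\cap d))=((a\cap d)\sqcup(b\cap d))\cap((a\cap d)\sqcup(c\cap d))$ for all $a,b,c,d$, and associative if $\sqcup$ is associative. An ado-semilattice is an associative distributive o-semilattice. *)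

theory Defs
  imports Main
begin

definition Par :: "'x set \<Rightarrow> 'y set \<Rightarrow> ('x \<times> 'y) set set" where
  "Par X Y = {f. f \<subseteq> X \<times> Y \<and> (\<forall>x y z. (x, y) \<in> f \<longrightarrow> (x, z) \<in> f \<longrightarrow> y = z)}"

definition override :: "('x \<times> 'y) set \<Rightarrow> ('x \<times> 'y) set \<Rightarrow> ('x \<times> 'y) set" where
  "override f g = f \<union> {p \<in> g. fst p \<notin> Domain f}"

text \<open>The algebra (UNIV::'a set, join, meet) is isomorphic to some A \<subseteq> Par X Y closed under
  override and intersection (namely A = the image of the embedding h).\<close>
definition functional_in ::
  "('a \<Rightarrow> 'a \<Rightarrow> 'a) \<Rightarrow> ('a \<Rightarrow> 'a \<Rightarrow> 'a) \<Rightarrow> 'x set \<Rightarrow> 'y set \<Rightarrow> bool" where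
  "functional_in join meet X Y \<longleftrightarrow>
     (\<exists>h :: 'a \<Rightarrow> ('x \<times> 'y) set.
        inj h \<and> (\<forall>a. h a \<in> Par X Y) \<and>
        (\<forall>a b. h (join a b) = override (h a) (h b)) \<and>
        (\<forall>a b. h (meet a b) = h a \<inter> h b))"

definition oleq :: "('a \<Rightarrow> 'a \<Rightarrow> 'a) \<Rightarrow> 'a \<Rightarrow> 'a \<Rightarrow> bool" where
  "oleq meet x y \<longleftrightarrow> x = meet x y"

definition o_semilattice :: "('a \<Rightarrow> 'a \<Rightarrow> 'a) \<Rightarrow> ('a \<Rightarrow> 'a \<Rightarrow> 'a) \<Rightarrow> bool" where
  "o_semilattice join meet \<longleftrightarrow>
     (\<forall>x y z. meet (meet x y) z = meet x (meet y z)) \<and>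
     (\<forall>x y. meet x y = meet y x) \<and>
     (\<forall>x. meet x x = x) \<and>
     (\<forall>x y. oleq meet x (join x y)) \<and>
     (\<forall>x y z. oleq meet (join (meet x y) (meet y z)) y) \<and>
     (\<forall>x y. oleq meet (join x y) (join x (meet y (join x y)))) \<and>
     (\<forall>x y z. oleq meet (meet x z) (join (meet x y) z))"

definition distributive_o :: "('a \<Rightarrow> 'a \<Rightarrow> 'a) \<Rightarrow> ('a \<Rightarrow> 'a \<Rightarrow> 'a) \<Rightarrow> bool" where
  "distributive_o join meet \<longleftrightarrow>
     (\<forall>a b c d. join (meet a d) (meet (meet b d) (meet c d)) =
                meet (join (meet a d) (meet b d)) (join (meet a d) (meet c d)))"

definition ado_semilattice :: "('a \<Rightarrow> 'a \<Rightarrow> 'a) \<Rightarrow> ('a \<Rightarrow> 'a \<Rightarrow> 'a) \<Rightarrow> bool" where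
  "ado_semilattice join meet \<longleftrightarrow>
     o_semilattice join meet \<and> distributive_o join meet \<and>
     (\<forall>x y z. join (join x y) z = join x (join y z))"

end

theory Submission
  imports Defs
begin


locale ado =
  fixes J :: "'a \<Rightarrow> 'a \<Rightarrow> 'a" (infixl "\<squnion>" 65)
    and M :: "'a \<Rightarrow> 'a \<Rightarrow> 'a" (infixl "\<sqinter>" 70)
  assumes massoc: "(x \<sqinter> y) \<sqinter> z = x \<sqinter> (y \<sqinter> z)"
    and mcomm: "x \<sqinter> y = y \<sqinter> x"
    and midem: "x \<sqinter> x = x"
    and ax1: "x = x \<sqinter> (x \<squnion> y)"
    and ax2: "(x \<sqinter> y) \<squnion> (y \<sqinter> z) = ((x \<sqinter> y) \<squnion> (y \<sqinter> z)) \<sqinter> y"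
    and ax3: "x \<squnion> y = (x \<squnion> y) \<sqinter> (x \<squnion> (y \<sqinter> (x \<squnion> y)))"
    and ax4: "x \<sqinter> z = (x \<sqinter> z) \<sqinter> ((x \<sqinter> y) \<squnion> z)"
    and dist: "(a \<sqinter> d) \<squnion> ((b \<sqinter> d) \<sqinter> (c \<sqinter> d)) = ((a \<sqinter> d) \<squnion> (b \<sqinter> d)) \<sqinter> ((a \<sqinter> d) \<squnion> (c \<sqinter> d))"
    and jassoc: "(x \<squnion> y) \<squnion> z = x \<squnion> (y \<squnion> z)"
begin

definition le :: "'a \<Rightarrow> 'a \<Rightarrow> bool" (infix "\<preceq>" 50) where "x \<preceq> y \<longleftrightarrow> x = x \<sqinter> y"

lemma mlc: "x \<sqinter> (y \<sqinter> z) = y \<sqinter> (x \<sqinter> z)" by (metis massoc mcomm)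
lemmas mac = massoc mcomm mlc

lemma le_refl: "x \<preceq> x" by (simp add: le_def midem)
lemma le_trans: "x \<preceq> y \<Longrightarrow> y \<preceq> z \<Longrightarrow> x \<preceq> z" unfolding le_def by (metis massoc)
lemma le_antisym: "x \<preceq> y \<Longrightarrow> y \<preceq> x \<Longrightarrow> x = y" unfolding le_def by (metis mcomm)
lemma le_m1: "x \<sqinter> y \<preceq> x" unfolding le_def by (metis mac midem)
lemma le_m2: "x \<sqinter> y \<preceq> y" unfolding le_def by (metis mac midem)
lemma le_mI: "z \<preceq> x \<Longrightarrow> z \<preceq> y \<Longrightarrow> z \<preceq> x \<sqinter> y" unfolding le_def by (metis massoc)
lemma le_m_iff: "z \<preceq> x \<sqinter> y \<longleftrightarrow> z \<preceq> x \<and> z \<preceq> y" by (meson le_m1 le_m2 le_mI le_trans)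
lemma le_meq: "x \<preceq> y \<Longrightarrow> x \<sqinter> y = x" unfolding le_def by simp
lemma le_meq2: "x \<preceq> y \<Longrightarrow> y \<sqinter> x = x" unfolding le_def by (metis mcomm)
lemma mono_m: "x \<preceq> y \<Longrightarrow> x \<sqinter> z \<preceq> y \<sqinter> z" by (meson le_m1 le_m2 le_mI le_trans)

lemma i1: "x \<preceq> x \<squnion> y" using ax1 le_def by blast
lemma i2: "(x \<sqinter> y) \<squnion> (y \<sqinter> z) \<preceq> y" using ax2 le_def by blast
lemma i3: "x \<squnion> y \<preceq> x \<squnion> (y \<sqinter> (x \<squnion> y))" using ax3 le_def by blast
lemma i4: "x \<sqinter> z \<preceq> (x \<sqinter> y) \<squnion> z" using ax4 le_def by blast

lemma jidem: "x \<squnion> x = x" by (metis i1 i2 le_antisym midem)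
lemma lub: "x \<preceq> z \<Longrightarrow> y \<preceq> z \<Longrightarrow> x \<squnion> y \<preceq> z"
  by (metis i2 le_meq mcomm)
lemma ub2: "x \<preceq> z \<Longrightarrow> y \<preceq> z \<Longrightarrow> y \<preceq> x \<squnion> y"
  by (metis i4 le_meq le_meq2)
lemma comm: "x \<preceq> z \<Longrightarrow> y \<preceq> z \<Longrightarrow> x \<squnion> y = y \<squnion> x"
  by (meson i1 le_antisym lub ub2)
lemma lub_iff: "x \<preceq> z \<Longrightarrow> y \<preceq> z \<Longrightarrow> x \<squnion> y \<preceq> w \<longleftrightarrow> x \<preceq> w \<and> y \<preceq> w"
  by (meson i1 le_trans lub ub2)
lemma absorb1: "y \<preceq> x \<Longrightarrow> x \<squnion> y = x" by (meson i1 le_antisym le_refl lub)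
lemma absorb2: "x \<preceq> y \<Longrightarrow> x \<squnion> y = y" by (meson le_antisym le_refl lub ub2)



lemma rmono: "y \<preceq> z \<Longrightarrow> x \<squnion> y \<preceq> x \<squnion> z"
  by (metis absorb2 i1 jassoc)
lemma E1: "x \<squnion> y = x \<squnion> (y \<sqinter> (x \<squnion> y))"
  by (meson i1 i3 le_antisym le_m2 lub)
lemma distd: "a \<preceq> d \<Longrightarrow> b \<preceq> d \<Longrightarrow> c \<preceq> d \<Longrightarrow> a \<squnion> (b \<sqinter> c) = (a \<squnion> b) \<sqinter> (a \<squnion> c)"
  using dist[of a d b c] by (simp add: le_meq)
lemma mdist: "a \<preceq> d \<Longrightarrow> b \<preceq> d \<Longrightarrow> c \<preceq> d \<Longrightarrow> a \<sqinter> (b \<squnion> c) = (a \<sqinter> b) \<squnion> (a \<sqinter> c)"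
proof -
  assume h: "a \<preceq> d" "b \<preceq> d" "c \<preceq> d"
  have ab: "a \<sqinter> b \<preceq> d" using h le_m1 le_trans by blast
  have "(a \<sqinter> b) \<squnion> (a \<sqinter> c) = ((a \<sqinter> b) \<squnion> a) \<sqinter> ((a \<sqinter> b) \<squnion> c)"
    using distd[OF ab h(1) h(3)] .
  also have "(a \<sqinter> b) \<squnion> a = a" using absorb2 le_m1 by blast
  also have "(a \<sqinter> b) \<squnion> c = c \<squnion> (a \<sqinter> b)" using comm[OF ab h(3)] .
  also have "\<dots> = (c \<squnion> a) \<sqinter> (c \<squnion> b)" using distd[OF h(3) h(1) h(2)] .
  also have "a \<sqinter> \<dots> = a \<sqinter> (c \<squnion> b)"
    by (metis h(1) h(3) massoc le_meq ub2)
  also have "c \<squnion> b = b \<squnion> c" using comm h by blast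
  finally show ?thesis by simp
qed
lemma K: "w \<preceq> x \<squnion> y \<Longrightarrow> w = (w \<sqinter> x) \<squnion> (w \<sqinter> y)"
proof -
  assume w: "w \<preceq> x \<squnion> y"
  let ?s = "x \<squnion> y" let ?y = "y \<sqinter> (x \<squnion> y)"
  have s: "?s = x \<squnion> ?y" using E1 .
  have "w = w \<sqinter> (x \<squnion> ?y)" using w s le_def by metis
  also have "\<dots> = (w \<sqinter> x) \<squnion> (w \<sqinter> ?y)"
    by (rule mdist[of _ ?s]) (auto simp: w i1 le_m2)
  also have "w \<sqinter> ?y = w \<sqinter> y" by (metis w le_def mac)
  finally show ?thesis .
qed
lemma M1: "z \<sqinter> (x \<squnion> y) \<preceq> (z \<sqinter> x) \<squnion> (z \<sqinter> y)"
proof -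
  let ?w = "z \<sqinter> (x \<squnion> y)"
  have "?w = (?w \<sqinter> x) \<squnion> (?w \<sqinter> y)" using K le_m2 by blast
  also have "?w \<sqinter> x = z \<sqinter> x" by (metis i1 le_def mac)
  also have "(z \<sqinter> x) \<squnion> (?w \<sqinter> y) \<preceq> (z \<sqinter> x) \<squnion> (z \<sqinter> y)"
    by (rule rmono) (metis le_m1 mono_m mac)
  finally show ?thesis .
qed
lemma Lml: "x \<preceq> a \<Longrightarrow> a \<sqinter> (x \<squnion> y) = x \<squnion> (a \<sqinter> y)"
proof (rule le_antisym)
  assume x: "x \<preceq> a"
  show "a \<sqinter> (x \<squnion> y) \<preceq> x \<squnion> (a \<sqinter> y)" using M1[of a x y] le_meq2[OF x] by simp
  show "x \<squnion> (a \<sqinter> y) \<preceq> a \<sqinter> (x \<squnion> y)"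
    by (meson le_mI lub x le_m1 le_m2 rmono)
qed
end

context ado begin

definition Ba :: "'a \<Rightarrow> 'a \<Rightarrow> 'a" where "Ba a x = a \<sqinter> (x \<squnion> a)"

lemma mono_join: "x1 \<preceq> y1 \<Longrightarrow> x2 \<preceq> y2 \<Longrightarrow> y1 \<preceq> d \<Longrightarrow> y2 \<preceq> d \<Longrightarrow> x1 \<squnion> x2 \<preceq> y1 \<squnion> y2"
  by (meson i1 le_trans lub ub2)

lemma Ble: "Ba a x \<preceq> a" unfolding Ba_def by (rule le_m1)
lemma Ble2: "Ba a x \<preceq> x \<squnion> a" unfolding Ba_def by (rule le_m2)
lemma A_le_B: "a \<sqinter> x \<preceq> Ba a x"
  unfolding Ba_def by (meson i1 le_m1 le_m2 le_mI le_trans)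

lemma compat_le: "u \<preceq> z \<Longrightarrow> x \<preceq> z \<Longrightarrow> u \<preceq> v \<Longrightarrow> u \<preceq> x \<squnion> v"
  by (meson le_trans rmono ub2)

lemma Banti: "x \<preceq> x' \<Longrightarrow> Ba a x' \<preceq> Ba a x"
proof -
  assume h: "x \<preceq> x'"
  have "Ba a x' \<preceq> x \<squnion> a"
    by (rule compat_le[of _ "x' \<squnion> a"]) (meson Ble2 h i1 le_trans Ble)+
  then show ?thesis using Ble[of a x'] unfolding Ba_def by (simp add: le_mI)
qed

lemma J1: "a \<sqinter> (x \<squnion> y) \<preceq> (a \<sqinter> x) \<squnion> (a \<sqinter> y)" by (rule M1)

lemma J2: "Ba a x \<sqinter> (a \<sqinter> y) \<preceq> a \<sqinter> (x \<squnion> y)"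
proof -
  let ?u = "Ba a x \<sqinter> (a \<sqinter> y)"
  have "?u \<preceq> x \<squnion> y"
    by (rule compat_le[of _ "x \<squnion> a"]) (meson Ble2 le_m1 le_trans i1 le_m2)+
  moreover have "?u \<preceq> a" by (meson Ble le_m1 le_trans)
  ultimately show ?thesis by (simp add: le_mI)
qed

lemma J3: "Ba a (x \<squnion> y) \<preceq> (a \<sqinter> x) \<squnion> Ba a y"
proof -
  let ?w = "Ba a (x \<squnion> y)"
  have w: "?w \<preceq> x \<squnion> (y \<squnion> a)" using Ble2 jassoc by metis
  have "?w = (?w \<sqinter> x) \<squnion> (?w \<sqinter> (y \<squnion> a))" using K[OF w] .
  also have "\<dots> \<preceq> (a \<sqinter> x) \<squnion> Ba a y"
    apply (rule mono_join[of _ _ _ _ a])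
    using Ble le_m1 le_m2 mono_m unfolding Ba_def
       apply (metis mcomm)
      apply (metis le_mI le_m2 le_trans le_m1 mcomm Ble[unfolded Ba_def])
     apply (rule le_m1)
    apply (rule le_m1)
    done
  finally show ?thesis .
qed

lemma J4: "Ba a x \<sqinter> Ba a y \<preceq> Ba a (x \<squnion> y)"
proof -
  let ?u = "Ba a x \<sqinter> Ba a y"
  have "?u \<preceq> x \<squnion> (y \<squnion> a)"
    by (rule compat_le[of _ "x \<squnion> a"]) (meson Ble2 le_m1 le_trans i1 le_m2)+
  then have "?u \<preceq> (x \<squnion> y) \<squnion> a" by (simp add: jassoc)
  moreover have "?u \<preceq> a" by (meson Ble le_m1 le_trans)
  ultimately show ?thesis unfolding Ba_def by (simp add: le_mI)
qed

lemma J5: "p \<preceq> d \<Longrightarrow> q \<preceq> d \<Longrightarrow> a \<sqinter> p \<preceq> Ba a q"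
proof -
  assume h: "p \<preceq> d" "q \<preceq> d"
  have "a \<sqinter> p \<preceq> q \<squnion> a"
    by (rule compat_le[of _ d]) (meson h le_m2 le_trans le_m1)+
  then show ?thesis unfolding Ba_def by (simp add: le_mI le_m1)
qed


end

context ado begin

lemma LD: "x \<squnion> (y \<sqinter> z) = (x \<squnion> y) \<sqinter> (x \<squnion> z)"
proof (rule le_antisym)
  show "x \<squnion> (y \<sqinter> z) \<preceq> (x \<squnion> y) \<sqinter> (x \<squnion> z)"
    by (simp add: le_mI le_m1 le_m2 rmono)
next
  let ?w = "(x \<squnion> y) \<sqinter> (x \<squnion> z)"
  let ?U = "x \<squnion> (y \<sqinter> z)"
  have xw: "x \<preceq> ?w" by (simp add: i1 le_mI)
  have w1: "?w = (?w \<sqinter> x) \<squnion> (?w \<sqinter> y)" by (rule K[OF le_m1])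
  have wx: "?w \<sqinter> x = x" using xw le_meq2 by blast
  let ?v = "?w \<sqinter> y"
  have vle: "?v \<preceq> x \<squnion> z" by (meson le_m1 le_m2 le_trans)
  have v: "?v = (?v \<sqinter> x) \<squnion> (?v \<sqinter> z)" by (rule K[OF vle])
  have "?v \<sqinter> x \<preceq> ?U" by (meson i1 le_m2 le_trans)
  moreover have "?v \<sqinter> z \<preceq> ?U"
  proof (rule compat_le[of _ ?w])
    show "?v \<sqinter> z \<preceq> ?w" by (meson le_m1 le_trans)
    show "x \<preceq> ?w" by (rule xw)
    show "?v \<sqinter> z \<preceq> y \<sqinter> z" by (meson le_m1 le_m2 le_mI le_trans)
  qed
  ultimately have "(?v \<sqinter> x) \<squnion> (?v \<sqinter> z) \<preceq> ?U" by (rule lub)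
  then have "?v \<preceq> ?U" using v by simp
  then have "x \<squnion> ?v \<preceq> ?U" by (meson i1 lub)
  then show "?w \<preceq> ?U" using w1 wx by simp
qed

lemma S1: "x \<preceq> d \<Longrightarrow> Ba d (Ba a x) \<preceq> x \<squnion> Ba d a"
proof -
  assume xd: "x \<preceq> d"
  define u where "u = Ba d (Ba a x)"
  have ud: "u \<preceq> d" unfolding u_def by (rule Ble)
  have e1: "x \<squnion> a = x \<squnion> Ba a x" unfolding Ba_def by (rule E1)
  have u0: "u \<preceq> x \<squnion> (Ba a x \<squnion> d)" unfolding u_def by (rule compat_le[OF Ble xd Ble2])
  have eq: "x \<squnion> (Ba a x \<squnion> d) = x \<squnion> (a \<squnion> d)"
    using jassoc[of x "Ba a x" d] jassoc[of x a d] e1 by simp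
  have u: "u \<preceq> x \<squnion> (a \<squnion> d)" using u0 eq by simp
  have uK: "u = (u \<sqinter> x) \<squnion> (u \<sqinter> (a \<squnion> d))" by (rule K[OF u])
  have m: "(u \<sqinter> x) \<squnion> (u \<sqinter> (a \<squnion> d)) \<preceq> x \<squnion> Ba d a"
  proof (rule mono_join[of _ _ _ _ d])
    show "u \<sqinter> x \<preceq> x" by (rule le_m2)
    show "u \<sqinter> (a \<squnion> d) \<preceq> Ba d a" unfolding Ba_def[of d a] by (rule le_mI[OF le_trans[OF le_m1 ud] le_m2])
    show "x \<preceq> d" by (rule xd)
    show "Ba d a \<preceq> d" by (rule Ble)
  qed
  show ?thesis using m uK unfolding u_def by simp
qed

lemma Ba_top: "e \<preceq> a \<squnion> d \<Longrightarrow> Ba a e = a"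
proof -
  assume e: "e \<preceq> a \<squnion> d"
  have "a \<preceq> e \<squnion> a" by (rule ub2[OF e i1])
  then show ?thesis unfolding Ba_def by (simp add: le_meq)
qed

lemma J6: "p \<preceq> d \<Longrightarrow> q \<preceq> d \<Longrightarrow> Ba a (p \<sqinter> q) \<preceq> Ba a p \<squnion> Ba a q"
proof -
  assume pd: "p \<preceq> d" and qd: "q \<preceq> d"
  define E where "E = Ba d a"
  define Z where "Z = Ba a p \<squnion> Ba a q"
  have Ed: "E \<preceq> d" unfolding E_def by (rule Ble)
  have Za: "Z \<preceq> a" unfolding Z_def by (rule lub) (rule Ble)+
  have pZ: "Ba a p \<preceq> Z" unfolding Z_def by (rule i1)
  have qZ: "Ba a q \<preceq> Z" unfolding Z_def by (rule ub2[OF Ble Ble])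
  have 1: "Ba d Z \<preceq> p \<squnion> E"
    using le_trans[OF Banti[OF pZ] S1[OF pd]] unfolding E_def .
  have 2: "Ba d Z \<preceq> q \<squnion> E"
    using le_trans[OF Banti[OF qZ] S1[OF qd]] unfolding E_def .
  have pqd: "p \<sqinter> q \<preceq> d" by (meson le_m1 le_trans pd)
  have eq: "(p \<squnion> E) \<sqinter> (q \<squnion> E) = (p \<sqinter> q) \<squnion> E"
    using comm[OF pd Ed] comm[OF qd Ed] distd[OF Ed pd qd] comm[OF Ed pqd] by simp
  have 3: "Ba d Z \<preceq> (p \<sqinter> q) \<squnion> E" using le_mI[OF 1 2] eq by simp
  have 4: "Ba a ((p \<sqinter> q) \<squnion> E) \<preceq> Z \<squnion> Ba a d"
    by (rule le_trans[OF Banti[OF 3] S1[OF Za]])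
  have 5: "Z \<squnion> Ba a d = Z"
    by (rule absorb1) (meson Banti pd pZ le_trans)
  have top: "Ba a E = a" unfolding E_def by (rule Ba_top[of _ a d]) (simp add: Ba_def le_m2)
  have 6: "Ba a (p \<sqinter> q) = Ba a (p \<sqinter> q) \<sqinter> Ba a E" unfolding top by (rule le_meq[OF Ble, symmetric])
  have 7: "Ba a (p \<sqinter> q) \<preceq> Ba a ((p \<sqinter> q) \<squnion> E)" using J4[of a "p \<sqinter> q" E] 6 by simp
  show ?thesis using le_trans[OF 7 4] 5 unfolding Z_def by simp
qed

lemma J7: "Ba a ((x \<squnion> y) \<sqinter> y) \<sqinter> Ba a x \<preceq> (a \<sqinter> x) \<squnion> Ba a y"
proof -
  define v where "v = (x \<squnion> y) \<sqinter> y"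
  define u where "u = Ba a v \<sqinter> Ba a x"
  have ua: "u \<preceq> a" unfolding u_def by (meson Ble le_m1 le_trans)
  have u0: "u \<preceq> x \<squnion> (v \<squnion> a)" unfolding u_def
    by (rule compat_le[of _ "x \<squnion> a"]) (meson Ble2 le_m1 le_m2 le_trans i1)+
  have xv: "x \<squnion> v = x \<squnion> y" unfolding v_def
    using LD[of x "x \<squnion> y" y] jassoc[of x x y] jidem[of x] midem[of "x \<squnion> y"] by simp
  have u: "u \<preceq> x \<squnion> (y \<squnion> a)" using u0 xv jassoc[of x v a] jassoc[of x y a] by simp
  have uK: "u = (u \<sqinter> x) \<squnion> (u \<sqinter> (y \<squnion> a))" by (rule K[OF u])
  have m: "(u \<sqinter> x) \<squnion> (u \<sqinter> (y \<squnion> a)) \<preceq> (a \<sqinter> x) \<squnion> Ba a y"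
  proof (rule mono_join[of _ _ _ _ a])
    show "u \<sqinter> x \<preceq> a \<sqinter> x" using ua by (meson le_m1 le_m2 le_mI le_trans)
    show "u \<sqinter> (y \<squnion> a) \<preceq> Ba a y" unfolding Ba_def[of a y] using ua by (meson le_m1 le_m2 le_mI le_trans)
  qed (simp_all add: le_m1 Ble)
  show ?thesis using m uK unfolding u_def v_def by simp
qed

end

context ado begin

definition pfilter :: "'a \<Rightarrow> 'a set \<Rightarrow> bool" where
  "pfilter a P \<longleftrightarrow> (\<forall>x\<in>P. x \<preceq> a) \<and> a \<in> P \<and> (\<forall>x y. x \<in> P \<longrightarrow> x \<preceq> y \<longrightarrow> y \<preceq> a \<longrightarrow> y \<in> P)
     \<and> (\<forall>x\<in>P. \<forall>y\<in>P. x \<sqinter> y \<in> P)"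

definition primef :: "'a \<Rightarrow> 'a set \<Rightarrow> bool" where
  "primef a P \<longleftrightarrow> pfilter a P \<and> (\<forall>x y. x \<preceq> a \<longrightarrow> y \<preceq> a \<longrightarrow> x \<squnion> y \<in> P \<longrightarrow> x \<in> P \<or> y \<in> P)"

lemma prime_exists:
  assumes ea: "e \<preceq> a" and ne: "e \<noteq> a"
  shows "\<exists>P. primef a P \<and> e \<notin> P"
proof -
  let ?A = "{F. pfilter a F \<and> e \<notin> F}"
  have a1: "{a} \<in> ?A"
    using ne unfolding pfilter_def by (auto simp: le_refl midem intro: le_antisym)
  have "\<exists>M\<in>?A. \<forall>X\<in>?A. M \<subseteq> X \<longrightarrow> X = M"
  proof (rule subset_Zorn_nonempty)
    show "?A \<noteq> {}" using a1 by blast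
  next
    fix C assume Cne: "C \<noteq> {}" and ch: "subset.chain ?A C"
    have CA: "C \<subseteq> ?A" and chn: "\<forall>X\<in>C. \<forall>Y\<in>C. X \<subseteq> Y \<or> Y \<subseteq> X"
      using ch unfolding subset.chain_def by auto
    show "\<Union>C \<in> ?A"
    proof -
      have "pfilter a (\<Union>C)" unfolding pfilter_def
      proof (intro conjI ballI allI impI)
        fix x assume "x \<in> \<Union>C" then show "x \<preceq> a" using CA unfolding pfilter_def by blast
      next
        show "a \<in> \<Union>C" using Cne CA unfolding pfilter_def by blast
      next
        fix x y assume "x \<in> \<Union>C" "x \<preceq> y" "y \<preceq> a"
        then show "y \<in> \<Union>C" using CA unfolding pfilter_def by blast
      next
        fix x y assume x: "x \<in> \<Union>C" and y: "y \<in> \<Union>C"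
        then obtain X Y where X: "X \<in> C" "x \<in> X" and Y: "Y \<in> C" "y \<in> Y" by blast
        from chn X Y have "X \<subseteq> Y \<or> Y \<subseteq> X" by blast
        then show "x \<sqinter> y \<in> \<Union>C"
        proof
          assume "X \<subseteq> Y" then show ?thesis using X Y CA unfolding pfilter_def by blast
        next
          assume "Y \<subseteq> X" then show ?thesis using X Y CA unfolding pfilter_def by blast
        qed
      qed
      moreover have "e \<notin> \<Union>C" using CA by blast
      ultimately show ?thesis by blast
    qed
  qed
  then obtain M where MA: "M \<in> ?A" and max: "\<forall>X\<in>?A. M \<subseteq> X \<longrightarrow> X = M" by blast
  have pf: "pfilter a M" and eM: "e \<notin> M" using MA by auto
  have Ma: "\<And>x. x \<in> M \<Longrightarrow> x \<preceq> a" and aM: "a \<in> M"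
    and Mup: "\<And>x y. x \<in> M \<Longrightarrow> x \<preceq> y \<Longrightarrow> y \<preceq> a \<Longrightarrow> y \<in> M"
    and Mm: "\<And>x y. x \<in> M \<Longrightarrow> y \<in> M \<Longrightarrow> x \<sqinter> y \<in> M"
    using pf unfolding pfilter_def by blast+
  have gen: "\<exists>f\<in>M. f \<sqinter> x \<preceq> e" if xa: "x \<preceq> a" and xM: "x \<notin> M" for x
  proof (rule ccontr)
    assume nf: "\<not> (\<exists>f\<in>M. f \<sqinter> x \<preceq> e)"
    let ?G = "{z. z \<preceq> a \<and> (\<exists>f\<in>M. f \<sqinter> x \<preceq> z)}"
    have "pfilter a ?G" unfolding pfilter_def
    proof (intro conjI ballI allI impI)
      fix z assume "z \<in> ?G" then show "z \<preceq> a" by blast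
    next
      show "a \<in> ?G" using aM le_refl le_m1 by blast
    next
      fix z y assume "z \<in> ?G" "z \<preceq> y" "y \<preceq> a" then show "y \<in> ?G" using le_trans by blast
    next
      fix z y assume z: "z \<in> ?G" and y: "y \<in> ?G"
      then obtain f g where f: "f \<in> M" "f \<sqinter> x \<preceq> z" and g: "g \<in> M" "g \<sqinter> x \<preceq> y" by blast
      have "(f \<sqinter> g) \<sqinter> x \<preceq> z \<sqinter> y"
        by (rule le_mI) (meson f(2) g(2) le_m1 le_m2 le_mI le_trans)+
      moreover have "z \<sqinter> y \<preceq> a" using z le_m1 le_trans by blast
      ultimately show "z \<sqinter> y \<in> ?G" using Mm[OF f(1) g(1)] by blast
    qed
    moreover have "e \<notin> ?G" using nf by blast
    ultimately have "?G \<in> ?A" by blast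
    moreover have "M \<subseteq> ?G" using Ma le_m1 by blast
    ultimately have "?G = M" using max by blast
    moreover have "x \<in> ?G" using xa aM le_m2 by blast
    ultimately show False using xM by blast
  qed
  have "primef a M" unfolding primef_def
  proof (intro conjI allI impI pf)
    fix x y assume xa: "x \<preceq> a" and ya: "y \<preceq> a" and xy: "x \<squnion> y \<in> M"
    show "x \<in> M \<or> y \<in> M"
    proof (rule ccontr)
      assume "\<not> (x \<in> M \<or> y \<in> M)"
      then have "x \<notin> M" "y \<notin> M" by auto
      then obtain f g where f: "f \<in> M" "f \<sqinter> x \<preceq> e" and g: "g \<in> M" "g \<sqinter> y \<preceq> e"
        using gen xa ya by meson
      let ?h = "f \<sqinter> g"
      have hM: "?h \<in> M" using Mm f g by blast
      have ha: "?h \<preceq> a" using Ma[OF hM] .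
      have "?h \<sqinter> (x \<squnion> y) \<in> M" using Mm[OF hM xy] .
      moreover have "?h \<sqinter> (x \<squnion> y) = (?h \<sqinter> x) \<squnion> (?h \<sqinter> y)" by (rule mdist[OF ha xa ya])
      moreover have "(?h \<sqinter> x) \<squnion> (?h \<sqinter> y) \<preceq> e"
        by (rule lub) (meson f(2) g(2) le_m1 le_m2 le_mI le_trans mono_m)+
      ultimately show False using Mup ea eM by metis
    qed
  qed
  then show ?thesis using eM by blast
qed

end

context ado begin

definition good :: "'a set \<Rightarrow> bool" where
  "good D \<longleftrightarrow> (\<forall>x y. x \<in> D \<longrightarrow> x \<preceq> y \<longrightarrow> y \<in> D)
    \<and> (\<forall>u v w. u \<sqinter> v \<in> D \<longrightarrow> u \<sqinter> w \<in> D \<longrightarrow> (u \<sqinter> v) \<sqinter> w \<in> D)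
    \<and> (\<forall>x y. x \<notin> D \<longrightarrow> (x \<squnion> y \<in> D \<longleftrightarrow> y \<in> D))
    \<and> (\<forall>x y. x \<notin> D \<longrightarrow> y \<in> D \<longrightarrow> (x \<squnion> y) \<sqinter> y \<in> D)"

definition Dset :: "'a \<Rightarrow> 'a set \<Rightarrow> 'a set" where
  "Dset a P = {c. a \<sqinter> c \<in> P \<or> Ba a c \<notin> P}"

lemma good_Dset:
  assumes pr: "primef a P"
  shows "good (Dset a P)"
proof -
  have Pa: "\<And>x. x \<in> P \<Longrightarrow> x \<preceq> a" and aP: "a \<in> P"
    and Pup: "\<And>x y. x \<in> P \<Longrightarrow> x \<preceq> y \<Longrightarrow> y \<preceq> a \<Longrightarrow> y \<in> P"
    and Pm: "\<And>x y. x \<in> P \<Longrightarrow> y \<in> P \<Longrightarrow> x \<sqinter> y \<in> P"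
    and Ppr: "\<And>x y. x \<preceq> a \<Longrightarrow> y \<preceq> a \<Longrightarrow> x \<squnion> y \<in> P \<Longrightarrow> x \<in> P \<or> y \<in> P"
    using pr unfolding primef_def pfilter_def by blast+
  have Aa: "\<And>c. a \<sqinter> c \<preceq> a" by (rule le_m1)
  have Ppr2: "\<And>x y. x \<preceq> a \<Longrightarrow> y \<preceq> a \<Longrightarrow> x \<squnion> y \<in> P \<Longrightarrow> x \<notin> P \<Longrightarrow> y \<in> P"
    using Ppr by blast
  have up: "Ba a c \<in> P" if "z \<in> P" "z \<preceq> Ba a c" for z c using Pup[OF that Ble] .
  have upA: "a \<sqinter> c \<in> P" if "z \<in> P" "z \<preceq> a \<sqinter> c" for z c using Pup[OF that Aa] .
  let ?D = "Dset a P"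
  have D1: "\<forall>x y. x \<in> ?D \<longrightarrow> x \<preceq> y \<longrightarrow> y \<in> ?D"
  proof (intro allI impI)
    fix x y assume x: "x \<in> ?D" and xy: "x \<preceq> y"
    show "y \<in> ?D"
    proof (cases "a \<sqinter> x \<in> P")
      case True
      have "a \<sqinter> x \<preceq> a \<sqinter> y" using xy by (meson le_m1 le_m2 le_mI le_trans)
      then show ?thesis using upA True unfolding Dset_def by blast
    next
      case False
      then have "Ba a x \<notin> P" using x unfolding Dset_def by blast
      then have "Ba a y \<notin> P" using Pup[OF _ Banti[OF xy] Ble] by blast
      then show ?thesis unfolding Dset_def by blast
    qed
  qed
  have D2: "\<forall>u v w. u \<sqinter> v \<in> ?D \<longrightarrow> u \<sqinter> w \<in> ?D \<longrightarrow> (u \<sqinter> v) \<sqinter> w \<in> ?D"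
  proof (intro allI impI)
    fix u v w
    assume pD: "u \<sqinter> v \<in> ?D" and qD: "u \<sqinter> w \<in> ?D"
    define p where "p = u \<sqinter> v"
    define q where "q = u \<sqinter> w"
    have pu: "p \<preceq> u" unfolding p_def by (rule le_m1)
    have qu: "q \<preceq> u" unfolding q_def by (rule le_m1)
    have r: "(u \<sqinter> v) \<sqinter> w = p \<sqinter> q" unfolding p_def q_def by (metis mac midem)
    have pD': "a \<sqinter> p \<in> P \<or> Ba a p \<notin> P" using pD unfolding Dset_def p_def by blast
    have qD': "a \<sqinter> q \<in> P \<or> Ba a q \<notin> P" using qD unfolding Dset_def q_def by blast
    have "a \<sqinter> (p \<sqinter> q) \<in> P \<or> Ba a (p \<sqinter> q) \<notin> P"
    proof (cases "a \<sqinter> p \<in> P")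
      case pA: True
      show ?thesis
      proof (cases "a \<sqinter> q \<in> P")
        case True
        have "a \<sqinter> (p \<sqinter> q) = (a \<sqinter> p) \<sqinter> (a \<sqinter> q)" by (metis mac midem)
        then show ?thesis using Pm[OF pA True] by simp
      next
        case False
        then have "Ba a q \<notin> P" using qD' by blast
        moreover have "Ba a q \<in> P" using up[OF pA J5[OF pu qu]] .
        ultimately show ?thesis by blast
      qed
    next
      case pA: False
      then have pB: "Ba a p \<notin> P" using pD' by blast
      show ?thesis
      proof (cases "a \<sqinter> q \<in> P")
        case True
        have "Ba a p \<in> P" using up[OF True J5[OF qu pu]] .
        then show ?thesis using pB by blast
      next
        case False
        then have qB: "Ba a q \<notin> P" using qD' by blast
        have "Ba a (p \<sqinter> q) \<notin> P"
        proof
          assume "Ba a (p \<sqinter> q) \<in> P"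
          then have "Ba a p \<squnion> Ba a q \<in> P"
            using Pup J6[OF pu qu] lub[OF Ble Ble] by blast
          then show False using Ppr[OF Ble Ble] pB qB by blast
        qed
        then show ?thesis by blast
      qed
    qed
    then show "(u \<sqinter> v) \<sqinter> w \<in> ?D" unfolding Dset_def r by blast
  qed
  have D3: "\<forall>x y. x \<notin> ?D \<longrightarrow> (x \<squnion> y \<in> ?D \<longleftrightarrow> y \<in> ?D)"
  proof (intro allI impI)
    fix x y assume "x \<notin> ?D"
    then have xA: "a \<sqinter> x \<notin> P" and xB: "Ba a x \<in> P" unfolding Dset_def by auto
    show "x \<squnion> y \<in> ?D \<longleftrightarrow> y \<in> ?D"
    proof
      assume "x \<squnion> y \<in> ?D"
      then have "a \<sqinter> (x \<squnion> y) \<in> P \<or> Ba a (x \<squnion> y) \<notin> P" unfolding Dset_def by blast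
      then show "y \<in> ?D"
      proof
        assume "a \<sqinter> (x \<squnion> y) \<in> P"
        then have "(a \<sqinter> x) \<squnion> (a \<sqinter> y) \<in> P" using Pup J1 lub[OF Aa Aa] by blast
        then have "a \<sqinter> y \<in> P" using Ppr[OF Aa Aa] xA by blast
        then show ?thesis unfolding Dset_def by blast
      next
        assume nb: "Ba a (x \<squnion> y) \<notin> P"
        have "Ba a y \<notin> P"
        proof
          assume "Ba a y \<in> P"
          then have "Ba a x \<sqinter> Ba a y \<in> P" using Pm xB by blast
          then show False using up[OF _ J4] nb by blast
        qed
        then show ?thesis unfolding Dset_def by blast
      qed
    next
      assume "y \<in> ?D"
      then have "a \<sqinter> y \<in> P \<or> Ba a y \<notin> P" unfolding Dset_def by blast
      then show "x \<squnion> y \<in> ?D"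
      proof
        assume "a \<sqinter> y \<in> P"
        then have "Ba a x \<sqinter> (a \<sqinter> y) \<in> P" using Pm xB by blast
        then have "a \<sqinter> (x \<squnion> y) \<in> P" using upA[OF _ J2] by blast
        then show ?thesis unfolding Dset_def by blast
      next
        assume yB: "Ba a y \<notin> P"
        have "Ba a (x \<squnion> y) \<notin> P"
        proof
          assume "Ba a (x \<squnion> y) \<in> P"
          then have "(a \<sqinter> x) \<squnion> Ba a y \<in> P" using Pup J3 lub[OF Aa Ble] by blast
          then show False using Ppr[OF Aa Ble] xA yB by blast
        qed
        then show ?thesis unfolding Dset_def by blast
      qed
    qed
  qed
  have D4: "\<forall>x y. x \<notin> ?D \<longrightarrow> y \<in> ?D \<longrightarrow> (x \<squnion> y) \<sqinter> y \<in> ?D"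
  proof (intro allI impI)
    fix x y assume "x \<notin> ?D" and yD: "y \<in> ?D"
    then have xA: "a \<sqinter> x \<notin> P" and xB: "Ba a x \<in> P" unfolding Dset_def by auto
    from yD have "a \<sqinter> y \<in> P \<or> Ba a y \<notin> P" unfolding Dset_def by blast
    then show "(x \<squnion> y) \<sqinter> y \<in> ?D"
    proof
      assume yA: "a \<sqinter> y \<in> P"
      then have "Ba a x \<sqinter> (a \<sqinter> y) \<in> P" using Pm xB by blast
      then have "a \<sqinter> (x \<squnion> y) \<in> P" using upA[OF _ J2] by blast
      then have "(a \<sqinter> (x \<squnion> y)) \<sqinter> (a \<sqinter> y) \<in> P" using Pm yA by blast
      moreover have "(a \<sqinter> (x \<squnion> y)) \<sqinter> (a \<sqinter> y) = a \<sqinter> ((x \<squnion> y) \<sqinter> y)" by (metis mac midem)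
      ultimately show ?thesis unfolding Dset_def by simp
    next
      assume yB: "Ba a y \<notin> P"
      have "Ba a ((x \<squnion> y) \<sqinter> y) \<notin> P"
      proof
        assume "Ba a ((x \<squnion> y) \<sqinter> y) \<in> P"
        then have "Ba a ((x \<squnion> y) \<sqinter> y) \<sqinter> Ba a x \<in> P" using Pm xB by blast
        then have "(a \<sqinter> x) \<squnion> Ba a y \<in> P" using Pup J7 lub[OF Aa Ble] by blast
        then show False using Ppr[OF Aa Ble] xA yB by blast
      qed
      then show ?thesis unfolding Dset_def by blast
    qed
  qed
  show ?thesis unfolding good_def using D1 D2 D3 D4 by blast
qed

lemma separate:
  assumes "x \<noteq> x \<sqinter> y"
  shows "\<exists>D. good D \<and> x \<in> D \<and> x \<sqinter> y \<notin> D"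
proof -
  have ea: "x \<sqinter> y \<preceq> x" by (rule le_m1)
  obtain P where pr: "primef x P" and nP: "x \<sqinter> y \<notin> P"
    using prime_exists[OF ea] assms by metis
  have xP: "x \<in> P" using pr unfolding primef_def pfilter_def by blast
  have "x \<in> Dset x P" unfolding Dset_def using xP midem by simp
  moreover have "x \<sqinter> y \<notin> Dset x P"
  proof -
    have "x \<sqinter> (x \<sqinter> y) = x \<sqinter> y" by (metis mac midem)
    moreover have "Ba x (x \<sqinter> y) = x" unfolding Ba_def using absorb2[OF ea] midem by simp
    ultimately show ?thesis unfolding Dset_def using nP xP by simp
  qed
  ultimately show ?thesis using good_Dset[OF pr] by blast
qed

end

context ado begin

definition cls :: "'a set \<Rightarrow> 'a \<Rightarrow> 'a set" where "cls D x = {y. x \<sqinter> y \<in> D}"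

definition rep :: "'a \<Rightarrow> ('a set set \<times> 'a set set) set" where
  "rep x = {({D}, {cls D x}) | D. good D \<and> x \<in> D}"

lemma good_up: "good D \<Longrightarrow> x \<in> D \<Longrightarrow> x \<preceq> y \<Longrightarrow> y \<in> D" unfolding good_def by blast
lemma good_m: "good D \<Longrightarrow> u \<sqinter> v \<in> D \<Longrightarrow> u \<sqinter> w \<in> D \<Longrightarrow> (u \<sqinter> v) \<sqinter> w \<in> D" unfolding good_def by blast
lemma good_j: "good D \<Longrightarrow> x \<notin> D \<Longrightarrow> (x \<squnion> y \<in> D \<longleftrightarrow> y \<in> D)" unfolding good_def by blast
lemma good_j2: "good D \<Longrightarrow> x \<notin> D \<Longrightarrow> y \<in> D \<Longrightarrow> (x \<squnion> y) \<sqinter> y \<in> D" unfolding good_def by blast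

lemma cls_eq:
  assumes g: "good D" and uv: "u \<sqinter> v \<in> D"
  shows "cls D u = cls D v"
proof -
  have "z \<in> cls D u \<longleftrightarrow> z \<in> cls D v" for z
  proof
    assume "z \<in> cls D u"
    then have "u \<sqinter> z \<in> D" unfolding cls_def by simp
    then have "(u \<sqinter> v) \<sqinter> z \<in> D" using good_m[OF g uv] by simp
    moreover have "(u \<sqinter> v) \<sqinter> z \<preceq> v \<sqinter> z" by (metis le_m2 mono_m massoc)
    ultimately show "z \<in> cls D v" unfolding cls_def using good_up[OF g] by blast
  next
    assume "z \<in> cls D v"
    then have "v \<sqinter> z \<in> D" unfolding cls_def by simp
    moreover have "v \<sqinter> u \<in> D" using uv mcomm by metis
    ultimately have "(v \<sqinter> u) \<sqinter> z \<in> D" using good_m[OF g] by blast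
    moreover have "(v \<sqinter> u) \<sqinter> z \<preceq> u \<sqinter> z" by (metis le_m2 mono_m massoc)
    ultimately show "z \<in> cls D u" unfolding cls_def using good_up[OF g] by blast
  qed
  then show ?thesis by blast
qed

lemma cls_self: "x \<in> D \<Longrightarrow> x \<in> cls D x" unfolding cls_def by (simp add: midem)

lemma meet_char:
  assumes g: "good D"
  shows "(x \<sqinter> y \<in> D \<and> C = cls D (x \<sqinter> y)) \<longleftrightarrow> (x \<in> D \<and> y \<in> D \<and> C = cls D x \<and> C = cls D y)"
proof
  assume h: "x \<sqinter> y \<in> D \<and> C = cls D (x \<sqinter> y)"
  then have xy: "x \<sqinter> y \<in> D" by blast
  have "x \<in> D" using good_up[OF g xy le_m1] .
  moreover have "y \<in> D" using good_up[OF g xy le_m2] .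
  moreover have "cls D (x \<sqinter> y) = cls D x" by (rule cls_eq[OF g]) (metis xy mac midem)
  moreover have "cls D (x \<sqinter> y) = cls D y" by (rule cls_eq[OF g]) (metis xy mac midem)
  ultimately show "x \<in> D \<and> y \<in> D \<and> C = cls D x \<and> C = cls D y" using h by simp
next
  assume h: "x \<in> D \<and> y \<in> D \<and> C = cls D x \<and> C = cls D y"
  then have "y \<in> cls D x" using cls_self by metis
  then have xy: "x \<sqinter> y \<in> D" unfolding cls_def by simp
  moreover have "cls D (x \<sqinter> y) = cls D x" by (rule cls_eq[OF g]) (metis xy mac midem)
  ultimately show "x \<sqinter> y \<in> D \<and> C = cls D (x \<sqinter> y)" using h by simp
qed

lemma join_char:
  assumes g: "good D"
  shows "(x \<squnion> y \<in> D \<and> C = cls D (x \<squnion> y)) \<longleftrightarrow> ((x \<in> D \<and> C = cls D x) \<or> (x \<notin> D \<and> y \<in> D \<and> C = cls D y))"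
proof (cases "x \<in> D")
  case True
  have "x \<squnion> y \<in> D" using good_up[OF g True i1] .
  moreover have "cls D x = cls D (x \<squnion> y)" by (rule cls_eq[OF g]) (metis True ax1)
  ultimately show ?thesis using True by auto
next
  case False
  have e: "x \<squnion> y \<in> D \<longleftrightarrow> y \<in> D" using good_j[OF g False] .
  have "y \<in> D \<Longrightarrow> cls D (x \<squnion> y) = cls D y" by (rule cls_eq[OF g]) (rule good_j2[OF g False])
  then show ?thesis using e False by auto
qed

lemma rep_mem: "(p, c) \<in> rep x \<longleftrightarrow> (\<exists>D. p = {D} \<and> c = {cls D x} \<and> good D \<and> x \<in> D)"
  unfolding rep_def by blast

lemma rep_meet: "rep (x \<sqinter> y) = rep x \<inter> rep y"
proof (rule set_eqI)
  fix z :: "'a set set \<times> 'a set set"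
  obtain p c where z: "z = (p, c)" by (cases z)
  show "z \<in> rep (x \<sqinter> y) \<longleftrightarrow> z \<in> rep x \<inter> rep y"
  proof
    assume "z \<in> rep (x \<sqinter> y)"
    then obtain D where D: "p = {D}" "c = {cls D (x \<sqinter> y)}" "good D" "x \<sqinter> y \<in> D"
      unfolding z rep_mem by blast
    have hh: "x \<in> D \<and> y \<in> D \<and> cls D (x \<sqinter> y) = cls D x \<and> cls D (x \<sqinter> y) = cls D y"
      using meet_char[OF D(3), of x y "cls D (x \<sqinter> y)", THEN iffD1, OF conjI[OF D(4) refl]] .
    note hx = hh[THEN conjunct1] hh[THEN conjunct2, THEN conjunct1]
      hh[THEN conjunct2, THEN conjunct2, THEN conjunct1] hh[THEN conjunct2, THEN conjunct2, THEN conjunct2]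
    have cx: "c = {cls D x}" using D(2) hx(3) by simp
    have cy: "c = {cls D y}" using D(2) hx(4) by simp
    have "(p, c) \<in> rep x" unfolding rep_mem using D(1,3) hx(1) cx by blast
    moreover have "(p, c) \<in> rep y" unfolding rep_mem using D(1,3) hx(2) cy by blast
    ultimately show "z \<in> rep x \<inter> rep y" unfolding z by blast
  next
    assume zz: "z \<in> rep x \<inter> rep y"
    then have "(p, c) \<in> rep x" unfolding z by simp
    then obtain D1 where D1: "p = {D1}" "c = {cls D1 x}" "good D1" "x \<in> D1"
      unfolding rep_mem by blast
    from zz have "(p, c) \<in> rep y" unfolding z by simp
    then obtain D2 where D2: "p = {D2}" "c = {cls D2 y}" "good D2" "y \<in> D2"
      unfolding rep_mem by blast
    have e: "D1 = D2" using D1(1) D2(1) by simp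
    have ce: "cls D1 x = cls D1 y" using D1(2) D2(2) e by simp
    have "x \<sqinter> y \<in> D1 \<and> cls D1 x = cls D1 (x \<sqinter> y)"
      using meet_char[OF D1(3), of x y "cls D1 x", THEN iffD2] D1(4) D2(4) e ce by simp
    then have "c = {cls D1 (x \<sqinter> y)}" using D1(2) by simp
    then show "z \<in> rep (x \<sqinter> y)" unfolding z rep_mem using D1(1,3) \<open>x \<sqinter> y \<in> D1 \<and> _\<close> by blast
  qed
qed

lemma rep_join: "rep (x \<squnion> y) = override (rep x) (rep y)"
proof (rule set_eqI)
  fix z :: "'a set set \<times> 'a set set"
  obtain p c where z: "z = (p, c)" by (cases z)
  have dom: "p \<in> Domain (rep x) \<longleftrightarrow> (\<exists>D. p = {D} \<and> good D \<and> x \<in> D)" for p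
    unfolding Domain_iff rep_mem by blast
  have ov: "z \<in> override (rep x) (rep y) \<longleftrightarrow> z \<in> rep x \<or> (z \<in> rep y \<and> p \<notin> Domain (rep x))"
    unfolding override_def z by simp
  show "z \<in> rep (x \<squnion> y) \<longleftrightarrow> z \<in> override (rep x) (rep y)"
  proof
    assume "z \<in> rep (x \<squnion> y)"
    then obtain D where D: "p = {D}" "c = {cls D (x \<squnion> y)}" "good D" "x \<squnion> y \<in> D"
      unfolding z rep_mem by blast
    then have "(x \<in> D \<and> cls D (x \<squnion> y) = cls D x) \<or> (x \<notin> D \<and> y \<in> D \<and> cls D (x \<squnion> y) = cls D y)"
      using join_char[OF D(3), of x y "cls D (x \<squnion> y)"] by blast
    then show "z \<in> override (rep x) (rep y)"
    proof
      assume "x \<in> D \<and> cls D (x \<squnion> y) = cls D x"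
      then have "z \<in> rep x" unfolding z rep_mem using D by metis
      then show ?thesis using ov by blast
    next
      assume h: "x \<notin> D \<and> y \<in> D \<and> cls D (x \<squnion> y) = cls D y"
      then have "z \<in> rep y" unfolding z rep_mem using D by metis
      moreover have "p \<notin> Domain (rep x)" using dom h D(1) by blast
      ultimately show ?thesis using ov by blast
    qed
  next
    assume "z \<in> override (rep x) (rep y)"
    then have "z \<in> rep x \<or> (z \<in> rep y \<and> p \<notin> Domain (rep x))" using ov by blast
    then show "z \<in> rep (x \<squnion> y)"
    proof
      assume "z \<in> rep x"
      then obtain D where D: "p = {D}" "c = {cls D x}" "good D" "x \<in> D" unfolding z rep_mem by blast
      then have "x \<squnion> y \<in> D \<and> cls D x = cls D (x \<squnion> y)"
        using join_char[OF D(3), of x y "cls D x"] by blast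
      then show ?thesis unfolding z rep_mem using D by metis
    next
      assume h: "z \<in> rep y \<and> p \<notin> Domain (rep x)"
      then obtain D where D: "p = {D}" "c = {cls D y}" "good D" "y \<in> D" unfolding z rep_mem by blast
      have "x \<notin> D" using h dom D by blast
      then have "x \<squnion> y \<in> D \<and> cls D y = cls D (x \<squnion> y)"
        using join_char[OF D(3), of x y "cls D y"] D by blast
      then show ?thesis unfolding z rep_mem using D by metis
    qed
  qed
qed

lemma rep_par: "rep x \<in> Par UNIV UNIV"
  unfolding Par_def rep_def by auto

lemma rep_inj: "inj rep"
proof (rule injI)
  have key: "rep x \<noteq> rep y" if ne: "x \<noteq> x \<sqinter> y" for x y
  proof
    assume eq: "rep x = rep y"
    obtain D where g: "good D" and xD: "x \<in> D" and nxy: "x \<sqinter> y \<notin> D" using separate[OF ne] by blast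
    have "({D}, {cls D x}) \<in> rep x" unfolding rep_mem using g xD by blast
    then have "({D}, {cls D x}) \<in> rep y" using eq by simp
    then obtain D' where "{D} = {D'}" "{cls D x} = {cls D' y}" "good D'" "y \<in> D'" unfolding rep_mem by blast
    then have yD: "y \<in> D" and c: "cls D x = cls D y" by auto
    have "x \<in> cls D y" using c cls_self[OF xD] by simp
    then have "y \<sqinter> x \<in> D" unfolding cls_def by simp
    then show False using nxy mcomm by metis
  qed
  fix x y assume eq: "rep x = rep y"
  show "x = y"
  proof (rule ccontr)
    assume "x \<noteq> y"
    then have "x \<noteq> x \<sqinter> y \<or> y \<noteq> y \<sqinter> x" using mcomm by metis
    then show False using key eq by metis
  qed
qed

lemma functional: "functional_in (\<squnion>) (\<sqinter>) (UNIV :: 'a set set set) (UNIV :: 'a set set set)"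
  unfolding functional_in_def using rep_inj rep_par rep_join rep_meet by blast

end

lemma ado_from:
  assumes h: "ado_semilattice join meet"
  shows "ado join meet"
  apply (insert h[unfolded ado_semilattice_def o_semilattice_def distributive_o_def oleq_def])
  apply (rule ado.intro)
  apply (elim conjE; metis)+
  done



lemma ov1: "f \<subseteq> override f g" unfolding override_def by blast
lemma ov2: "override (f \<inter> g) (g \<inter> k) \<subseteq> g" unfolding override_def by blast
lemma ov3: "override f g \<subseteq> override f (g \<inter> override f g)" unfolding override_def by blast
lemma ov4: "f \<in> Par X Y \<Longrightarrow> f \<inter> k \<subseteq> override (f \<inter> g) k"
  unfolding override_def Par_def by (auto simp: Domain_iff) metis
lemma ov5: "override A (B \<inter> C) = override A B \<inter> override A C" unfolding override_def by blast
lemma ov6: "override (override f g) k = override f (override g k)" unfolding override_def by (auto simp: Domain_iff)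

lemma sound:
  assumes "functional_in join meet X Y"
  shows "ado_semilattice join meet"
proof -
  obtain h where inj: "inj h" and par: "\<And>a. h a \<in> Par X Y"
    and hj: "\<And>a b. h (join a b) = override (h a) (h b)"
    and hm: "\<And>a b. h (meet a b) = h a \<inter> h b"
    using assms unfolding functional_in_def by blast
  have eq: "\<And>a b. h a = h b \<Longrightarrow> a = b" using inj by (simp add: inj_eq)
  have le: "\<And>a b. h a \<subseteq> h b \<Longrightarrow> oleq meet a b"
    unfolding oleq_def by (rule eq) (simp add: hm Int_absorb2)
  have "o_semilattice join meet" unfolding o_semilattice_def
  proof (intro conjI allI)
    fix x y z show "meet (meet x y) z = meet x (meet y z)" by (rule eq) (simp add: hm Int_assoc)
  next
    fix x y show "meet x y = meet y x" by (rule eq) (simp add: hm Int_commute)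
  next
    fix x show "meet x x = x" by (rule eq) (simp add: hm)
  next
    fix x y show "oleq meet x (join x y)" by (rule le) (simp add: hj ov1)
  next
    fix x y z show "oleq meet (join (meet x y) (meet y z)) y" by (rule le) (simp add: hj hm ov2)
  next
    fix x y show "oleq meet (join x y) (join x (meet y (join x y)))"
      by (rule le) (simp add: hj hm ov3)
  next
    fix x y z show "oleq meet (meet x z) (join (meet x y) z)"
      by (rule le) (simp add: hj hm ov4[OF par])
  qed
  moreover have "distributive_o join meet" unfolding distributive_o_def
    by (intro allI, rule eq) (simp add: hj hm ov5)
  moreover have "\<forall>x y z. join (join x y) z = join x (join y z)"
    by (intro allI, rule eq) (simp add: hj ov6)
  ultimately show ?thesis unfolding ado_semilattice_def by blast
qed


theorem theorem4p10:
  fixes join meet :: "'a \<Rightarrow> 'a \<Rightarrow> 'a"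
  shows "((\<exists>(X :: 'x set) (Y :: 'y set). functional_in join meet X Y) \<longrightarrow> ado_semilattice join meet)
       \<and> (ado_semilattice join meet \<longrightarrow>
            (\<exists>(X :: 'a set set set) (Y :: 'a set set set). functional_in join meet X Y))"
proof (intro conjI impI)
  assume "\<exists>(X :: 'x set) (Y :: 'y set). functional_in join meet X Y"
  then show "ado_semilattice join meet" using sound by blast
next
  assume h: "ado_semilattice join meet"
  interpret ado join meet by (rule ado_from[OF h])
  show "\<exists>(X :: 'a set set set) (Y :: 'a set set set). functional_in join meet X Y"
    using functional by blast
qed

end
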